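(* Let $(u_n)_{n\in\mathbb N}$ be a nondecreasing sequence in $\{0,1\}$ and put $v_n=u_n+1$. In Martin-Löf's sequent calculus for ordinals, let $a=\mathrm S(\underline{u_n})_{n\in\mathbb N}$ and $b=\mathrm S(\underline{v_n})_{n\in\mathbb N}$. Then the sequent consisting of the single atomic formula $a<b$ is provable.
   Context: Martin-Löf's system: ordinals are inductively generated by the rule that for every finite or infinite sequence $u=(u_0,u_1,\dots)$ of ordinals (possibly empty), $\mathrm S(u)$ is an ordinal. $\underline 0$ is $\mathrm S$ of the empty sequence, $\mathrm{succ}(a)$ is $\mathrm S$ of the one-element sequence $(a)$, and $\underline{k+1}=\mathrm{succ}(\underline k)$. Atomic formulae are $a<b$ and $a\le b$ for ordinals $a,b$. A sequent is a finite set $\Gamma$ of atomic formulae (intuitively their classical disjunction); provable sequents are generated inductively by the two rules: from $\Gamma, a\le u_n$ for some index $n$ of $u$, infer $\Gamma, a<\mathrm S(u)$; from $\Gamma, u_n<b$ for every index $n$ of $u$, infer $\Gamma,\mathrm S(u)\le b$ (in particular $\Gamma,\mathrm S(\text{empty})\le b$ is provable). Here "$\Gamma,\varphi$" denotes $\Gamma\cup\{\varphi\}$. *)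

theory Defs
  imports Main
begin

text \<open>Martin-Loef ordinals: S applied to a finite sequence (list) or an
  infinite sequence (function on nat).\<close>
datatype ml_ord = Sf "ml_ord list" | Si "nat \<Rightarrow> ml_ord"

fun comps :: "ml_ord \<Rightarrow> ml_ord set" where
  "comps (Sf us) = set us"
| "comps (Si u) = range u"

fun numeral_ord :: "nat \<Rightarrow> ml_ord" where
  "numeral_ord 0 = Sf []"
| "numeral_ord (Suc k) = Sf [numeral_ord k]"

datatype ml_atom = Lt ml_ord ml_ord | Le ml_ord ml_ord

inductive provable :: "ml_atom set \<Rightarrow> bool" where
  lt_rule: "\<lbrakk>finite \<Gamma>; u \<in> comps s; provable (insert (Le a u) \<Gamma>)\<rbrakk>
            \<Longrightarrow> provable (insert (Lt a s) \<Gamma>)"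
| le_rule: "\<lbrakk>finite \<Gamma>; \<forall>u\<in>comps s. provable (insert (Lt u b) \<Gamma>)\<rbrakk>
            \<Longrightarrow> provable (insert (Le s b) \<Gamma>)"

end

theory Submission
  imports Defs
begin

lemma num_aux: "(\<forall>j. k \<le> j \<longrightarrow> provable {Le (numeral_ord k) (numeral_ord j)}) \<and>
  (\<forall>j. k < j \<longrightarrow> provable {Lt (numeral_ord k) (numeral_ord j)})"
proof (induction k)
  case 0
  have le: "provable {Le (numeral_ord 0) (numeral_ord j)}" for j
    using le_rule[of "{}" "Sf []" "numeral_ord j"] by simp
  have "provable {Lt (numeral_ord 0) (numeral_ord j)}" if jp: "0 < j" for j
  proof -
    obtain j' where j: "j = Suc j'" using jp by (cases j) auto
    show ?thesis using lt_rule[of "{}" "numeral_ord j'" "numeral_ord j" "numeral_ord 0"] le j by simp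
  qed
  then show ?case using le by blast
next
  case (Suc k)
  have le: "provable {Le (numeral_ord (Suc k)) (numeral_ord j)}" if "Suc k \<le> j" for j
    using le_rule[of "{}" "numeral_ord (Suc k)" "numeral_ord j"] Suc that by simp
  have "provable {Lt (numeral_ord (Suc k)) (numeral_ord j)}" if jp: "Suc k < j" for j
  proof -
    obtain j' where j: "j = Suc j'" using jp by (cases j) auto
    show ?thesis using lt_rule[of "{}" "numeral_ord j'" "numeral_ord j" "numeral_ord (Suc k)"] le j jp by simp
  qed
  then show ?case using le by blast
qed

lemma main_aux:
  assumes "\<forall>m. u m < v n"
  shows "provable {Lt (Si (\<lambda>n. numeral_ord (u n))) (Si (\<lambda>n. numeral_ord (v n)))}"
proof -
  have "provable {Le (Si (\<lambda>n. numeral_ord (u n))) (numeral_ord (v n))}"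
  proof -
    have "\<forall>x\<in>range (\<lambda>n. numeral_ord (u n)). provable {Lt x (numeral_ord (v n))}"
    proof
      fix x assume "x \<in> range (\<lambda>n. numeral_ord (u n))"
      then obtain m where x: "x = numeral_ord (u m)" by blast
      show "provable {Lt x (numeral_ord (v n))}" unfolding x using num_aux[of "u m"] assms by blast
    qed
    then show ?thesis using le_rule[of "{}" "Si (\<lambda>n. numeral_ord (u n))" "numeral_ord (v n)"] by simp
  qed
  then show ?thesis
    using lt_rule[of "{}" "numeral_ord (v n)" "Si (\<lambda>n. numeral_ord (v n))" "Si (\<lambda>n. numeral_ord (u n))"]
    by simp
qed

theorem lemma5p4:
  fixes u v :: "nat \<Rightarrow> nat"
  assumes "mono u"
    and "\<forall>n. u n \<in> {0, 1}"
    and "\<forall>n. v n = u n + 1"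
  shows "provable {Lt (Si (\<lambda>n. numeral_ord (u n))) (Si (\<lambda>n. numeral_ord (v n)))}"
proof (cases "\<exists>n. u n = 1")
  case True
  then obtain n where "u n = 1" by blast
  have "\<forall>m. u m < v n" proof (intro allI)
    fix m have "u m \<le> 1" using assms(2) by (metis insertE le_refl singletonD zero_le)
    then show "u m < v n" using assms(3) \<open>u n = 1\<close> by simp
  qed
  then show ?thesis by (rule main_aux)
next
  case False
  then have "\<forall>m. u m < v 0" using assms(2,3) by auto
  then show ?thesis by (rule main_aux)
qed

end
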